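(* Assume $\operatorname{rank}(X)=n$, let $m\ge\nu_n(X)$ be an integer, and let $A^\circ=[a_1^\circ\ \cdots\ a_s^\circ]\in\mathbb{R}^{n\times s}$ satisfy $\min_{i\in\mathbb{S}}|I_i(A^\circ)|\ge s\,m$. Let $$\gamma_m=\inf\big\{\|X_I^\top\eta\|_1:\eta\in\mathbb{R}^n,\ \|\eta\|_2=1,\ I\subset\mathbb{T},\ |I|\ge m\big\}.$$ If for some $r\in\{0,\ldots,N\}$ with $\xi_r(\varpi^N)<1/2$, $$\min_{i\ne j}\|a_i^\circ-a_j^\circ\|_2>\frac{2\,\delta_r(A^\circ)}{\gamma_m\big(1-2\xi_r(\varpi^N)\big)},$$ then $A^\circ$ and $\hat A$ are comparable over $\varpi^N$ for every $\hat A\in\arg\min_A\mathcal{J}(A)$.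
   Context: Data: integers $n,s,N\ge1$ and a dataset $\varpi^N=((x_1,y_1),\ldots,(x_N,y_N))$ with $x_t\in\mathbb{R}^n$, $y_t\in\mathbb{R}$; $X=[x_1\ \cdots\ x_N]\in\mathbb{R}^{n\times N}$, and $X_I$ denotes the submatrix of columns indexed by $I$. Let $\mathbb{T}=\{1,\ldots,N\}$, $\mathbb{S}=\{1,\ldots,s\}$. For $A=[a_1\ \cdots\ a_s]\in\mathbb{R}^{n\times s}$, $\sigma_A:\mathbb{T}\to\mathbb{S}$ is a switching signal satisfying $\sigma_A(t)\in\arg\min_{i\in\mathbb{S}}|y_t-x_t^\top a_i|$ for all $t$, selected uniquely by a fixed rule depending only on $A$ and the data (among all admissible choices, one maximizing $\min_{i}|I_i(A)|$, ties then broken by assigning the smallest admissible index). $I_i(A)=\{t\in\mathbb{T}:\sigma_A(t)=i\}$. $\phi(A)=\big(y_1-x_1^\top a_{\sigma_A(1)},\ldots,y_N-x_N^\top a_{\sigma_A(N)}\big)^\top$, $\mathcal{J}(A)=\|\phi(A)\|_1$, $\phi_{\mathcal{T}}(A)$ its subvector indexed by $\mathcal{T}\subset\mathbb{T}$. $\mathcal{S}_r=\{w\in\mathbb{R}^N:\|w\|_0\le r\}$, $\delta_r(A)=\inf_{w\in\mathcal{S}_r}\|\phi(A)-w\|_1$. The $r$-th concentration ratio is $$\xi_r(\varpi^N)=\sup\Big\{\frac{\|\phi_{\mathcal{T}}(A)-\phi_{\mathcal{T}}(A')\|_1}{\|\phi(A)-\phi(A')\|_1}: A,A'\in\mathbb{R}^{n\times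 s},\ \mathcal{T}\subset\mathbb{T},\ \phi(A)\ne\phi(A'),\ |\mathcal{T}|\le r\Big\}.$$ Genericity index: for $\operatorname{rank}(X)=n$, $\nu_n(X)$ is the smallest integer $m$ such that every submatrix formed by $m$ columns of $X$ has rank $n$. Comparability: $A,A'$ are comparable over $\varpi^N$ if there is a permutation $\pi$ of $\mathbb{S}$ with $|I_i(A)\cap I_{\pi(i)}(A')|\ge\nu_n(X)$ for all $i$. *)

theory Defs
  imports "HOL-Analysis.Analysis"
begin

text \<open>Conventions: the index set T is {1..N}, S is {1..s}. Regressor vectors
 x t :: real^'n (so n = CARD('n)), outputs y t :: real. A parameter matrix
 A = [a_1 ... a_s] is a function A :: nat => real^'n whose values on {1..s} are the
 columns (values outside {1..s} are irrelevant to every notion below).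
 Vectors in R^N are functions nat => real considered on {1..N}.\<close>

definition admissible_sw ::
  "nat \<Rightarrow> nat \<Rightarrow> (nat \<Rightarrow> real^'n) \<Rightarrow> (nat \<Rightarrow> real) \<Rightarrow> (nat \<Rightarrow> real^'n) \<Rightarrow> (nat \<Rightarrow> nat) set" where
  "admissible_sw s N x y A =
     {\<sigma>. (\<forall>t\<in>{1..N}. \<sigma> t \<in> {1..s} \<and>
            (\<forall>i\<in>{1..s}. \<bar>y t - x t \<bullet> A (\<sigma> t)\<bar> \<le> \<bar>y t - x t \<bullet> A i\<bar>))
        \<and> (\<forall>t. t \<notin> {1..N} \<longrightarrow> \<sigma> t = 0)}"

definition sw_score :: "nat \<Rightarrow> nat \<Rightarrow> (nat \<Rightarrow> nat) \<Rightarrow> nat" where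
  "sw_score s N \<sigma> = Min ((\<lambda>i. card {t\<in>{1..N}. \<sigma> t = i}) ` {1..s})"

definition max_sw ::
  "nat \<Rightarrow> nat \<Rightarrow> (nat \<Rightarrow> real^'n) \<Rightarrow> (nat \<Rightarrow> real) \<Rightarrow> (nat \<Rightarrow> real^'n) \<Rightarrow> (nat \<Rightarrow> nat) set" where
  "max_sw s N x y A =
     {\<sigma> \<in> admissible_sw s N x y A.
        \<forall>\<sigma>' \<in> admissible_sw s N x y A. sw_score s N \<sigma>' \<le> sw_score s N \<sigma>}"

text \<open>Tie-breaking: the lexicographically smallest (sigma(1), ..., sigma(N)),
 i.e. the smallest admissible index is assigned first.\<close>
definition sigma_sw ::
  "nat \<Rightarrow> nat \<Rightarrow> (nat \<Rightarrow> real^'n) \<Rightarrow> (nat \<Rightarrow> real) \<Rightarrow> (nat \<Rightarrow> real^'n) \<Rightarrow> nat \<Rightarrow> nat" where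
  "sigma_sw s N x y A = (THE \<sigma>. \<sigma> \<in> max_sw s N x y A \<and>
      (\<forall>\<sigma>' \<in> max_sw s N x y A. \<sigma>' \<noteq> \<sigma> \<longrightarrow>
         (\<exists>t\<in>{1..N}. \<sigma> t < \<sigma>' t \<and> (\<forall>u\<in>{1..N}. u < t \<longrightarrow> \<sigma> u = \<sigma>' u))))"

definition Iset ::
  "nat \<Rightarrow> nat \<Rightarrow> (nat \<Rightarrow> real^'n) \<Rightarrow> (nat \<Rightarrow> real) \<Rightarrow> (nat \<Rightarrow> real^'n) \<Rightarrow> nat \<Rightarrow> nat set" where
  "Iset s N x y A i = {t \<in> {1..N}. sigma_sw s N x y A t = i}"

definition phi ::
  "nat \<Rightarrow> nat \<Rightarrow> (nat \<Rightarrow> real^'n) \<Rightarrow> (nat \<Rightarrow> real) \<Rightarrow> (nat \<Rightarrow> real^'n) \<Rightarrow> nat \<Rightarrow> real" where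
  "phi s N x y A t = y t - x t \<bullet> A (sigma_sw s N x y A t)"

definition Jcost ::
  "nat \<Rightarrow> nat \<Rightarrow> (nat \<Rightarrow> real^'n) \<Rightarrow> (nat \<Rightarrow> real) \<Rightarrow> (nat \<Rightarrow> real^'n) \<Rightarrow> real" where
  "Jcost s N x y A = (\<Sum>t\<in>{1..N}. \<bar>phi s N x y A t\<bar>)"

definition delta_r ::
  "nat \<Rightarrow> nat \<Rightarrow> (nat \<Rightarrow> real^'n) \<Rightarrow> (nat \<Rightarrow> real) \<Rightarrow> nat \<Rightarrow> (nat \<Rightarrow> real^'n) \<Rightarrow> real" where
  "delta_r s N x y r A = Inf {(\<Sum>t\<in>{1..N}. \<bar>phi s N x y A t - w t\<bar>) | w :: nat \<Rightarrow> real.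
       card {t\<in>{1..N}. w t \<noteq> 0} \<le> r}"

definition xi_r ::
  "nat \<Rightarrow> nat \<Rightarrow> (nat \<Rightarrow> real^'n) \<Rightarrow> (nat \<Rightarrow> real) \<Rightarrow> nat \<Rightarrow> real" where
  "xi_r s N x y r = Sup {(\<Sum>t\<in>\<T>. \<bar>phi s N x y A t - phi s N x y A' t\<bar>) /
                         (\<Sum>t\<in>{1..N}. \<bar>phi s N x y A t - phi s N x y A' t\<bar>)
       | A A' \<T>. \<T> \<subseteq> {1..N} \<and> (\<exists>t\<in>{1..N}. phi s N x y A t \<noteq> phi s N x y A' t)
                 \<and> card \<T> \<le> r}"

definition nu_gen :: "nat \<Rightarrow> (nat \<Rightarrow> real^'n) \<Rightarrow> nat" where
  "nu_gen N x = (LEAST m. \<forall>I. I \<subseteq> {1..N} \<and> card I = m \<longrightarrow> dim (x ` I) = CARD('n))"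

definition comparable ::
  "nat \<Rightarrow> nat \<Rightarrow> (nat \<Rightarrow> real^'n) \<Rightarrow> (nat \<Rightarrow> real) \<Rightarrow> (nat \<Rightarrow> real^'n) \<Rightarrow> (nat \<Rightarrow> real^'n) \<Rightarrow> bool" where
  "comparable s N x y A A' = (\<exists>\<pi>. \<pi> permutes {1..s} \<and>
      (\<forall>i\<in>{1..s}. card (Iset s N x y A i \<inter> Iset s N x y A' (\<pi> i)) \<ge> nu_gen N x))"

definition gamma_m :: "nat \<Rightarrow> (nat \<Rightarrow> real^'n) \<Rightarrow> nat \<Rightarrow> real" where
  "gamma_m N x m = Inf {(\<Sum>t\<in>I. \<bar>x t \<bullet> \<eta>\<bar>) | \<eta> I. norm \<eta> = 1 \<and> I \<subseteq> {1..N} \<and> card I \<ge> m}"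

end

theory Submission
  imports Defs "HOL-Library.List_Lexorder"
begin

lemma sigma_sw_range:
  fixes x :: "nat \<Rightarrow> real^'n"
  assumes s: "s \<ge> 1" and t: "t \<in> {1..N}"
  shows "sigma_sw s N x y A t \<in> {1..s}"
proof -
  define adm where "adm = admissible_sw s N x y A"
  define M where "M = max_sw s N x y A"
  define L where "L = (\<lambda>\<sigma>::nat\<Rightarrow>nat. map \<sigma> [1..<N+1])"
  have L_nth: "L \<sigma> ! (u - 1) = \<sigma> u" if "u \<in> {1..N}" for \<sigma> u
    proof - have "u - 1 < N" using that by auto then show ?thesis using that by (simp add: L_def nth_upt del: upt_Suc) qed
  have lenL: "length (L \<sigma>) = N" for \<sigma> by (simp add: L_def)
  have injL: "inj_on L adm"
  proof (rule inj_onI)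
    fix a b assume a: "a \<in> adm" and b: "b \<in> adm" and e: "L a = L b"
    show "a = b"
    proof
      fix u show "a u = b u"
      proof (cases "u \<in> {1..N}")
        case True then show ?thesis using L_nth[OF True, of a] L_nth[OF True, of b] e by simp
      next
        case False then show ?thesis using a b by (auto simp: adm_def admissible_sw_def)
      qed
    qed
  qed
  have "L ` adm \<subseteq> {xs. set xs \<subseteq> {0..s} \<and> length xs = N}"
    by (auto simp: L_def adm_def admissible_sw_def)
  then have "finite (L ` adm)" by (rule finite_subset) (rule finite_lists_length_eq, simp)
  then have finadm: "finite adm" using injL finite_imageD by blast
  have "\<exists>i\<in>{1..s}. \<forall>j\<in>{1..s}. \<bar>y u - x u \<bullet> A i\<bar> \<le> \<bar>y u - x u \<bullet> A j\<bar>" for u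
  proof -
    obtain i where "is_arg_min (\<lambda>i. \<bar>y u - x u \<bullet> A i\<bar>) (\<lambda>i. i \<in> {1..s}) i"
      using ex_is_arg_min_if_finite[of "{1..s}" "\<lambda>i. \<bar>y u - x u \<bullet> A i\<bar>"] s by auto
    then show ?thesis unfolding is_arg_min_def by (metis not_le)
  qed
  then obtain c where c: "\<And>u. c u \<in> {1..s} \<and> (\<forall>j\<in>{1..s}. \<bar>y u - x u \<bullet> A (c u)\<bar> \<le> \<bar>y u - x u \<bullet> A j\<bar>)"
    by metis
  have "(\<lambda>u. if u \<in> {1..N} then c u else 0) \<in> adm"
    using c by (auto simp: adm_def admissible_sw_def)
  then have "adm \<noteq> {}" by auto
  then have "Max (sw_score s N ` adm) \<in> sw_score s N ` adm" using finadm by (intro Max_in) auto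
  then obtain \<sigma>m where sm: "\<sigma>m \<in> adm" "sw_score s N \<sigma>m = Max (sw_score s N ` adm)" by auto
  have "\<sigma>m \<in> M" unfolding M_def max_sw_def adm_def[symmetric] using sm finadm by auto
  then have Mne: "M \<noteq> {}" by auto
  have Madm: "M \<subseteq> adm" by (auto simp: M_def max_sw_def adm_def)
  then have finM: "finite M" using finadm finite_subset by blast
  obtain \<sigma>0 where s0: "is_arg_min L (\<lambda>\<sigma>. \<sigma> \<in> M) \<sigma>0"
    using ex_is_arg_min_if_finite[OF finM Mne] by blast
  define P where "P = (\<lambda>\<sigma>. \<sigma> \<in> M \<and>
      (\<forall>\<sigma>' \<in> M. \<sigma>' \<noteq> \<sigma> \<longrightarrow>
         (\<exists>t\<in>{1..N}. \<sigma> t < \<sigma>' t \<and> (\<forall>u\<in>{1..N}. u < t \<longrightarrow> \<sigma> u = \<sigma>' u))))"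
  have "P \<sigma>0"
    unfolding P_def
  proof (intro conjI ballI impI)
    show "\<sigma>0 \<in> M" using s0 by (simp add: is_arg_min_def)
    fix \<sigma>' assume s': "\<sigma>' \<in> M" "\<sigma>' \<noteq> \<sigma>0"
    have "L \<sigma>0 \<noteq> L \<sigma>'" using injL s' \<open>\<sigma>0 \<in> M\<close> Madm by (metis inj_onD subsetD)
    moreover have "\<not> L \<sigma>' < L \<sigma>0" using s0 s' by (auto simp: is_arg_min_def)
    ultimately have "L \<sigma>0 < L \<sigma>'" by auto
    then have "(L \<sigma>0, L \<sigma>') \<in> lexord {(u, v). u < v}" by (simp add: list_less_def)
    then obtain i where i: "i < N" "take i (L \<sigma>0) = take i (L \<sigma>')" "L \<sigma>0 ! i < L \<sigma>' ! i"
      unfolding lexord_take_index_conv by (auto simp: lenL)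
    show "\<exists>t\<in>{1..N}. \<sigma>0 t < \<sigma>' t \<and> (\<forall>u\<in>{1..N}. u < t \<longrightarrow> \<sigma>0 u = \<sigma>' u)"
    proof (intro bexI[of _ "i+1"] conjI ballI impI)
      show "i + 1 \<in> {1..N}" using i by auto
      show "\<sigma>0 (i + 1) < \<sigma>' (i + 1)" using i(3) L_nth[of "i+1"] i(1) by auto
      fix u assume u: "u \<in> {1..N}" "u < i + 1"
      have "take i (L \<sigma>0) ! (u - 1) = take i (L \<sigma>') ! (u - 1)" using i(2) by simp
      moreover have "u - 1 < i" using u by auto
      ultimately have "L \<sigma>0 ! (u - 1) = L \<sigma>' ! (u - 1)" by (metis nth_take)
      then show "\<sigma>0 u = \<sigma>' u" using L_nth[OF u(1)] by simp
    qed
  qed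
  moreover have "\<sigma>1 = \<sigma>0" if P1: "P \<sigma>1" for \<sigma>1
  proof (rule ccontr)
    assume ne: "\<sigma>1 \<noteq> \<sigma>0"
    have m01: "\<sigma>0 \<in> M" "\<sigma>1 \<in> M" using P1 \<open>P \<sigma>0\<close> unfolding P_def by auto
    have "\<exists>t\<in>{1..N}. \<sigma>1 t < \<sigma>0 t \<and> (\<forall>u\<in>{1..N}. u < t \<longrightarrow> \<sigma>1 u = \<sigma>0 u)"
      using P1 m01 ne unfolding P_def by (metis (no_types, lifting))
    then obtain t1 where t1: "\<sigma>1 t1 < \<sigma>0 t1" "\<forall>u\<in>{1..N}. u < t1 \<longrightarrow> \<sigma>1 u = \<sigma>0 u" "t1 \<in> {1..N}"
      by blast
    have "\<exists>t\<in>{1..N}. \<sigma>0 t < \<sigma>1 t \<and> (\<forall>u\<in>{1..N}. u < t \<longrightarrow> \<sigma>0 u = \<sigma>1 u)"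
      using \<open>P \<sigma>0\<close> m01 ne unfolding P_def by (metis (no_types, lifting))
    then obtain t0 where t0: "\<sigma>0 t0 < \<sigma>1 t0" "\<forall>u\<in>{1..N}. u < t0 \<longrightarrow> \<sigma>0 u = \<sigma>1 u" "t0 \<in> {1..N}"
      by blast
    show False using t0 t1 by (metis less_asym' linorder_neqE_nat)
  qed
  ultimately have "\<exists>!\<sigma>. P \<sigma>" by blast
  then have "P (sigma_sw s N x y A)" unfolding sigma_sw_def P_def M_def by (rule theI')
  then have "sigma_sw s N x y A \<in> adm" using Madm unfolding P_def by auto
  then show ?thesis using t by (auto simp: adm_def admissible_sw_def)
qed


lemma nu_props:
  fixes x :: "nat \<Rightarrow> real^'n"
  assumes rank: "dim (x ` {1..N}) = CARD('n)"
  shows "\<forall>I. I \<subseteq> {1..N} \<and> card I = nu_gen N x \<longrightarrow> dim (x ` I) = CARD('n)"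
    and "nu_gen N x \<le> N" and "nu_gen N x \<ge> 1"
proof -
  define Q where "Q = (\<lambda>m. \<forall>I. I \<subseteq> {1..N} \<and> card I = m \<longrightarrow> dim (x ` I) = CARD('n))"
  have QN: "Q N"
    unfolding Q_def
  proof (intro allI impI)
    fix I assume "I \<subseteq> {1..N} \<and> card I = N"
    then have "I = {1..N}" by (intro card_subset_eq) auto
    then show "dim (x ` I) = CARD('n)" using rank by simp
  qed
  have nq: "nu_gen N x = (LEAST m. Q m)" unfolding nu_gen_def Q_def ..
  have QL: "Q (nu_gen N x)" unfolding nq by (rule LeastI[of Q, OF QN])
  then show "\<forall>I. I \<subseteq> {1..N} \<and> card I = nu_gen N x \<longrightarrow> dim (x ` I) = CARD('n)"
    unfolding Q_def .
  show "nu_gen N x \<le> N" unfolding nq using QN by (rule Least_le)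
  have "\<not> Q 0"
  proof
    assume "Q 0"
    then have Q0: "\<forall>I. I \<subseteq> {1..N} \<and> card I = 0 \<longrightarrow> dim (x ` I) = CARD('n)" unfolding Q_def .
    have "dim (x ` {}) = CARD('n)" using spec[where x="{}", OF Q0] by simp
    then have "(0::nat) = CARD('n)" by simp
    then show False by simp
  qed
  then show "nu_gen N x \<ge> 1"
  proof (rule contrapos_np)
    assume "\<not> 1 \<le> nu_gen N x"
    then have "nu_gen N x = 0" by simp
    then show "Q 0" using QL by simp
  qed
qed


lemma gamma_pos:
  fixes x :: "nat \<Rightarrow> real^'n"
  assumes rank: "dim (x ` {1..N}) = CARD('n)" and m: "nu_gen N x \<le> m" "m \<le> N"
  shows "gamma_m N x m > 0"
proof -
  define \<nu> where "\<nu> = nu_gen N x"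
  note nu = nu_props[OF rank, folded \<nu>_def]
  define \<J> where "\<J> = {J. J \<subseteq> {1..N} \<and> card J = \<nu>}"
  have finJ: "finite \<J>" unfolding \<J>_def by (rule finite_subset[of _ "Pow {1..N}"]) auto
  have "\<nu> \<le> card {1..N}" using nu(2) by simp
  then obtain J0 where "J0 \<subseteq> {1..N}" "card J0 = \<nu>" "finite J0" by (rule obtain_subset_with_card_n)
  then have neJ: "\<J> \<noteq> {}" unfolding \<J>_def by auto
  have "\<exists>c>0. \<forall>\<eta>::real^'n. norm \<eta> = 1 \<longrightarrow> c \<le> (\<Sum>t\<in>J. \<bar>x t \<bullet> \<eta>\<bar>)" if J: "J \<in> \<J>" for J
  proof -
    have Jsub: "J \<subseteq> {1..N}" and fin: "finite J" using J unfolding \<J>_def by (auto intro: finite_subset)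
    have "dim (x ` J) = DIM(real^'n)" using nu(1) J unfolding \<J>_def by simp
    then have sp: "span (x ` J) = UNIV" using dim_eq_full by blast
    have pos: "0 < (\<Sum>t\<in>J. \<bar>x t \<bullet> \<eta>\<bar>)" if "\<eta> \<noteq> 0" for \<eta> :: "real^'n"
    proof (rule ccontr)
      assume "\<not> ?thesis"
      then have "(\<Sum>t\<in>J. \<bar>x t \<bullet> \<eta>\<bar>) = 0" by (simp add: antisym sum_nonneg)
      then have z: "\<forall>t\<in>J. x t \<bullet> \<eta> = 0" using fin by (simp add: sum_nonneg_eq_0_iff)
      have "orthogonal \<eta> \<eta>"
        by (rule orthogonal_to_span[of _ "x ` J"]) (use sp z in \<open>auto simp: orthogonal_def inner_commute\<close>)
      then show False using that by (simp add: orthogonal_def)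
    qed
    have cont: "continuous_on (sphere 0 1) (\<lambda>\<eta>::real^'n. \<Sum>t\<in>J. \<bar>x t \<bullet> \<eta>\<bar>)"
      by (intro continuous_intros)
    obtain v :: "real^'n" where "norm v = 1" using vector_choose_size[of 1] by auto
    then have sne: "sphere (0::real^'n) 1 \<noteq> {}" by auto
    then obtain \<eta>0 where e0: "\<eta>0 \<in> sphere (0::real^'n) 1"
      "\<forall>\<eta>\<in>sphere 0 1. (\<Sum>t\<in>J. \<bar>x t \<bullet> \<eta>0\<bar>) \<le> (\<Sum>t\<in>J. \<bar>x t \<bullet> \<eta>\<bar>)"
      using continuous_attains_inf[OF compact_sphere sne cont] by blast
    have "\<eta>0 \<noteq> 0" using e0 by auto
    then show ?thesis using pos[of \<eta>0] e0 by (intro exI[of _ "\<Sum>t\<in>J. \<bar>x t \<bullet> \<eta>0\<bar>"]) auto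
  qed
  note cex = this
  define c where "c = (\<lambda>J. SOME c. c > 0 \<and> (\<forall>\<eta>::real^'n. norm \<eta> = 1 \<longrightarrow> c \<le> (\<Sum>t\<in>J. \<bar>x t \<bullet> \<eta>\<bar>)))"
  have c: "c J > 0 \<and> (\<forall>\<eta>::real^'n. norm \<eta> = 1 \<longrightarrow> c J \<le> (\<Sum>t\<in>J. \<bar>x t \<bullet> \<eta>\<bar>))" if "J \<in> \<J>" for J
    unfolding c_def using cex[OF that] by (rule someI_ex)
  define c0 where "c0 = Min (c ` \<J>)"
  have "c0 \<in> c ` \<J>" unfolding c0_def using finJ neJ by (intro Min_in) auto
  then obtain J1 where "J1 \<in> \<J>" "c0 = c J1" by blast
  then have c0pos: "c0 > 0" using c[of J1] by simp
  have c0le: "c0 \<le> c J" if "J \<in> \<J>" for J unfolding c0_def using finJ that by (intro Min_le) auto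
  define G where "G = {(\<Sum>t\<in>I. \<bar>x t \<bullet> \<eta>\<bar>) | \<eta> I. norm \<eta> = 1 \<and> I \<subseteq> {1..N} \<and> card I \<ge> m}"
  obtain v :: "real^'n" where v: "norm v = 1" using vector_choose_size[of 1] by auto
  have "(\<Sum>t\<in>{1..N}. \<bar>x t \<bullet> v\<bar>) \<in> G" unfolding G_def using v m by (intro CollectI exI[of _ v] exI[of _ "{1..N}"]) auto
  then have Gne: "G \<noteq> {}" by auto
  have "c0 \<le> g" if gG: "g \<in> G" for g
  proof -
    obtain \<eta> I where g: "g = (\<Sum>t\<in>I. \<bar>x t \<bullet> \<eta>\<bar>)" "norm \<eta> = 1" "I \<subseteq> {1..N}" "card I \<ge> m"
      using gG unfolding G_def by blast
    have "\<nu> \<le> card I" using g(4) m unfolding \<nu>_def by linarith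
    then obtain J where J: "J \<subseteq> I" "card J = \<nu>" "finite J" by (rule obtain_subset_with_card_n)
    have JJ: "J \<in> \<J>" using J g unfolding \<J>_def by auto
    have finI: "finite I" using g(3) by (rule finite_subset) simp
    have "c0 \<le> c J" using c0le JJ .
    also have "\<dots> \<le> (\<Sum>t\<in>J. \<bar>x t \<bullet> \<eta>\<bar>)" using c[OF JJ] g(2) by blast
    also have "\<dots> \<le> g" unfolding g(1) using J finI by (intro sum_mono2) auto
    finally show ?thesis .
  qed
  note cle = this
  have "c0 \<le> Inf G" by (rule cInf_greatest[OF Gne]) (rule cle)
  moreover have "gamma_m N x m = Inf G" unfolding gamma_m_def G_def ..
  ultimately show ?thesis using c0pos by linarith
qed


lemma gamma_lower:
  fixes x :: "nat \<Rightarrow> real^'n"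
  assumes I: "I \<subseteq> {1..N}" "card I \<ge> m"
  shows "gamma_m N x m * norm v \<le> (\<Sum>t\<in>I. \<bar>x t \<bullet> v\<bar>)"
proof (cases "v = 0")
  case True then show ?thesis by simp
next
  case False
  define G where "G = {(\<Sum>t\<in>I. \<bar>x t \<bullet> \<eta>\<bar>) | \<eta> I. norm \<eta> = 1 \<and> I \<subseteq> {1..N} \<and> card I \<ge> m}"
  define \<eta> where "\<eta> = v /\<^sub>R norm v"
  have nv: "norm v > 0" using False by simp
  have "norm \<eta> = 1" using False by (simp add: \<eta>_def)
  then have mem: "(\<Sum>t\<in>I. \<bar>x t \<bullet> \<eta>\<bar>) \<in> G" unfolding G_def using I by blast
  have bdd: "bdd_below G" unfolding G_def by (rule bdd_belowI[of _ 0]) (auto intro: sum_nonneg)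
  have "gamma_m N x m \<le> (\<Sum>t\<in>I. \<bar>x t \<bullet> \<eta>\<bar>)"
    unfolding gamma_m_def G_def[symmetric] using mem bdd by (rule cInf_lower)
  also have "(\<Sum>t\<in>I. \<bar>x t \<bullet> \<eta>\<bar>) = (\<Sum>t\<in>I. \<bar>x t \<bullet> v\<bar>) / norm v"
    unfolding \<eta>_def using nv by (simp add: abs_mult divide_inverse sum_distrib_left mult.commute)
  finally show ?thesis using nv by (simp add: pos_le_divide_eq)
qed


lemma div_le1_aux: "a \<le> b \<Longrightarrow> 0 \<le> b \<Longrightarrow> a / b \<le> (1::real)"
  by (cases "b = 0") (auto simp: divide_le_eq_1)

theorem lemma7:
  fixes s N m r :: nat and x :: "nat \<Rightarrow> real^'n" and y :: "nat \<Rightarrow> real"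
    and A0 :: "nat \<Rightarrow> real^'n"
  assumes "s \<ge> 1" and "N \<ge> 1"
    and rank: "dim (x ` {1..N}) = CARD('n)"
    and m: "m \<ge> nu_gen N x"
    and A0: "\<forall>i\<in>{1..s}. card (Iset s N x y A0 i) \<ge> s * m"
    and r: "r \<le> N" and xi: "xi_r s N x y r < 1/2"
    and sep: "\<forall>i\<in>{1..s}. \<forall>j\<in>{1..s}. i \<noteq> j \<longrightarrow>
       norm (A0 i - A0 j) > 2 * delta_r s N x y r A0 / (gamma_m N x m * (1 - 2 * xi_r s N x y r))"
  shows "\<forall>Ahat. (\<forall>A. Jcost s N x y Ahat \<le> Jcost s N x y A) \<longrightarrow> comparable s N x y A0 Ahat"
proof (intro allI impI)
  fix Ahat assume opt: "\<forall>A. Jcost s N x y Ahat \<le> Jcost s N x y A"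
  define p0 where "p0 = phi s N x y A0"
  define ph where "ph = phi s N x y Ahat"
  define e where "e = (\<lambda>t. ph t - p0 t)"
  define E where "E = (\<Sum>t\<in>{1..N}. \<bar>e t\<bar>)"
  define \<xi> where "\<xi> = xi_r s N x y r"
  define \<delta> where "\<delta> = delta_r s N x y r A0"
  define \<gamma> where "\<gamma> = gamma_m N x m"
  have JJ: "(\<Sum>t\<in>{1..N}. \<bar>ph t\<bar>) \<le> (\<Sum>t\<in>{1..N}. \<bar>p0 t\<bar>)"
    using opt[rule_format, of A0] by (simp add: Jcost_def ph_def p0_def)
  have E0: "0 \<le> E" unfolding E_def by (simp add: sum_nonneg)
  have Tbound: "(\<Sum>t\<in>T. \<bar>e t\<bar>) \<le> \<xi> * E" if T: "T \<subseteq> {1..N}" "card T \<le> r" for T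
  proof (cases "E = 0")
    case True
    then have "\<forall>t\<in>{1..N}. e t = 0" unfolding E_def by (simp add: sum_nonneg_eq_0_iff)
    then have "(\<Sum>t\<in>T. \<bar>e t\<bar>) = 0" using T by (intro sum.neutral) auto
    then show ?thesis using True by simp
  next
    case False
    then have Epos: "E > 0" using E0 by simp
    then have ex: "\<exists>t\<in>{1..N}. ph t \<noteq> p0 t" unfolding E_def e_def
      by (metis (no_types, lifting) abs_0 diff_self sum.neutral less_irrefl)
    define R where "R = {(\<Sum>t\<in>\<T>. \<bar>phi s N x y A t - phi s N x y A' t\<bar>) /
                         (\<Sum>t\<in>{1..N}. \<bar>phi s N x y A t - phi s N x y A' t\<bar>)
       | A A' \<T>. \<T> \<subseteq> {1..N} \<and> (\<exists>t\<in>{1..N}. phi s N x y A t \<noteq> phi s N x y A' t)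
                 \<and> card \<T> \<le> r}"
    have mem: "(\<Sum>t\<in>T. \<bar>e t\<bar>) / E \<in> R"
      unfolding R_def E_def e_def using T ex unfolding ph_def p0_def
      by (intro CollectI exI[of _ Ahat] exI[of _ A0] exI[of _ T]) auto
    have bdd: "bdd_above R"
    proof (rule bdd_aboveI[of _ 1])
      fix z assume "z \<in> R"
      then obtain A A' \<T> where z: "z = (\<Sum>t\<in>\<T>. \<bar>phi s N x y A t - phi s N x y A' t\<bar>) /
                         (\<Sum>t\<in>{1..N}. \<bar>phi s N x y A t - phi s N x y A' t\<bar>)"
        and TT: "\<T> \<subseteq> {1..N}" by (auto simp: R_def)
      have "(\<Sum>t\<in>\<T>. \<bar>phi s N x y A t - phi s N x y A' t\<bar>) \<le> (\<Sum>t\<in>{1..N}. \<bar>phi s N x y A t - phi s N x y A' t\<bar>)"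
        using TT by (intro sum_mono2) auto
      moreover have "0 \<le> (\<Sum>t\<in>{1..N}. \<bar>phi s N x y A t - phi s N x y A' t\<bar>)" by (simp add: sum_nonneg)
      ultimately show "z \<le> 1" unfolding z by (rule div_le1_aux)
    qed
    have "(\<Sum>t\<in>T. \<bar>e t\<bar>) / E \<le> \<xi>" unfolding \<xi>_def xi_r_def R_def[symmetric]
      using mem bdd by (rule cSup_upper)
    then show ?thesis using Epos by (simp add: divide_le_eq mult.commute)
  qed
  have key: "(1 - 2 * \<xi>) * E \<le> 2 * (\<Sum>t\<in>{1..N}. \<bar>p0 t - w t\<bar>)"
    if w: "card {t\<in>{1..N}. w t \<noteq> 0} \<le> r" for w :: "nat \<Rightarrow> real"
  proof -
    define T where "T = {t\<in>{1..N}. w t \<noteq> 0}"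
    define C where "C = {t\<in>{1..N}. w t = 0}"
    have fT: "finite T" and fC: "finite C" unfolding T_def C_def by auto
    have un: "{1..N} = T \<union> C" and dj: "T \<inter> C = {}" unfolding T_def C_def by auto
    have split: "(\<Sum>t\<in>{1..N}. f t) = (\<Sum>t\<in>T. f t) + (\<Sum>t\<in>C. f t)" for f :: "nat \<Rightarrow> real"
      unfolding un using fT fC dj by (rule sum.union_disjoint)
    have a: "(\<Sum>t\<in>T. \<bar>p0 t\<bar>) - (\<Sum>t\<in>T. \<bar>e t\<bar>) \<le> (\<Sum>t\<in>T. \<bar>ph t\<bar>)"
      unfolding sum_subtractf[symmetric] by (rule sum_mono) (auto simp: e_def)
    have b: "(\<Sum>t\<in>C. \<bar>e t\<bar>) - (\<Sum>t\<in>C. \<bar>p0 t\<bar>) \<le> (\<Sum>t\<in>C. \<bar>ph t\<bar>)"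
      unfolding sum_subtractf[symmetric] by (rule sum_mono) (auto simp: e_def)
    have "(\<Sum>t\<in>C. \<bar>p0 t\<bar>) = (\<Sum>t\<in>C. \<bar>p0 t - w t\<bar>)" by (rule sum.cong) (auto simp: C_def)
    also have "\<dots> \<le> (\<Sum>t\<in>{1..N}. \<bar>p0 t - w t\<bar>)" by (rule sum_mono2) (auto simp: C_def)
    finally have c: "(\<Sum>t\<in>C. \<bar>p0 t\<bar>) \<le> (\<Sum>t\<in>{1..N}. \<bar>p0 t - w t\<bar>)" .
    have d: "(\<Sum>t\<in>T. \<bar>e t\<bar>) \<le> \<xi> * E" using Tbound[of T] w unfolding T_def by blast
    have "(1 - 2 * \<xi>) * E = E - 2 * (\<xi> * E)" by (simp add: algebra_simps)
    then show ?thesis using a b c d JJ split[of "\<lambda>t. \<bar>ph t\<bar>"] split[of "\<lambda>t. \<bar>p0 t\<bar>"]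
      split[of "\<lambda>t. \<bar>e t\<bar>"] unfolding E_def by linarith
  qed
  have EB: "(1 - 2 * \<xi>) * E \<le> 2 * \<delta>"
  proof -
    define D where "D = {(\<Sum>t\<in>{1..N}. \<bar>phi s N x y A0 t - w t\<bar>) | w :: nat \<Rightarrow> real.
       card {t\<in>{1..N}. w t \<noteq> 0} \<le> r}"
    have "(\<Sum>t\<in>{1..N}. \<bar>phi s N x y A0 t - 0\<bar>) \<in> D" unfolding D_def
      by (intro CollectI exI[of _ "\<lambda>_. 0"]) auto
    then have "D \<noteq> {}" by auto
    moreover have "(1 - 2 * \<xi>) * E / 2 \<le> d" if dD: "d \<in> D" for d
    proof -
      obtain w where w: "card {t\<in>{1..N}. w t \<noteq> 0} \<le> r" "d = (\<Sum>t\<in>{1..N}. \<bar>phi s N x y A0 t - w t\<bar>)"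
        using dD unfolding D_def by blast
      show ?thesis using key[OF w(1)] w(2) unfolding p0_def by simp
    qed
    ultimately have "(1 - 2 * \<xi>) * E / 2 \<le> Inf D" by (intro cInf_greatest) auto
    then show ?thesis unfolding \<delta>_def delta_r_def D_def by simp
  qed
  have sm: "s * m \<le> N"
  proof -
    have "s * m \<le> card (Iset s N x y A0 1)" using A0 \<open>s \<ge> 1\<close> by auto
    also have "\<dots> \<le> card {1..N}" unfolding Iset_def by (rule card_mono) auto
    finally show ?thesis by simp
  qed
  have mN: "m \<le> N" using sm \<open>s \<ge> 1\<close> proof - have "m \<le> s * m" using \<open>s \<ge> 1\<close> by simp then show ?thesis using sm by linarith qed
  have m1: "m \<ge> 1" using nu_props(3)[OF rank] m by simp
  have gpos: "\<gamma> > 0" unfolding \<gamma>_def using gamma_pos[OF rank m mN] .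
  have xpos: "1 - 2 * \<xi> > 0" using xi unfolding \<xi>_def by simp
  define K where "K = (\<lambda>i k. Iset s N x y A0 i \<inter> Iset s N x y Ahat k)"
  have Ksub: "K i k \<subseteq> {1..N}" for i k unfolding K_def Iset_def by auto
  have Ksum: "\<gamma> * norm (A0 i - Ahat k) \<le> (\<Sum>t\<in>K i k. \<bar>e t\<bar>)" if "card (K i k) \<ge> m" for i k
  proof -
    have "(\<Sum>t\<in>K i k. \<bar>e t\<bar>) = (\<Sum>t\<in>K i k. \<bar>x t \<bullet> (A0 i - Ahat k)\<bar>)"
      by (rule sum.cong) (auto simp: K_def Iset_def e_def ph_def p0_def phi_def inner_diff_right)
    then show ?thesis unfolding \<gamma>_def using gamma_lower[OF Ksub that] by simp
  qed
  have pig: "\<exists>k\<in>{1..s}. card (K i k) \<ge> m" if i: "i \<in> {1..s}" for i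
  proof (rule ccontr)
    assume "\<not> ?thesis"
    then have lt: "\<forall>k\<in>{1..s}. card (K i k) \<le> m - 1" by auto
    have "Iset s N x y A0 i = (\<Union>k\<in>{1..s}. K i k)"
      using sigma_sw_range[OF \<open>s \<ge> 1\<close>] unfolding K_def Iset_def by fastforce
    then have "card (Iset s N x y A0 i) \<le> (\<Sum>k\<in>{1..s}. card (K i k))"
      by (simp add: card_UN_le)
    also have "\<dots> \<le> card {1..s} * (m - 1)" using lt sum_bounded_above[of "{1..s}" "\<lambda>k. card (K i k)" "m - 1"] by simp
    also have "\<dots> = s * (m - 1)" by simp
    also have "\<dots> < s * m" using m1 \<open>s \<ge> 1\<close> by simp
    finally have "card (Iset s N x y A0 i) < s * m" .
    moreover have "s * m \<le> card (Iset s N x y A0 i)" using A0 i by blast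
    ultimately show False by linarith
  qed
  define \<pi> where "\<pi> = (\<lambda>i. SOME k. k \<in> {1..s} \<and> card (K i k) \<ge> m)"
  have \<pi>: "\<pi> i \<in> {1..s} \<and> card (K i (\<pi> i)) \<ge> m" if "i \<in> {1..s}" for i
  proof -
    have "\<exists>k. k \<in> {1..s} \<and> card (K i k) \<ge> m" using pig[OF that] by blast
    then show ?thesis unfolding \<pi>_def by (rule someI_ex)
  qed
  have inj: "inj_on \<pi> {1..s}"
  proof (rule inj_onI, rule ccontr)
    fix i j assume ij: "i \<in> {1..s}" "j \<in> {1..s}" "\<pi> i = \<pi> j" "i \<noteq> j"
    define k where "k = \<pi> i"
    have ci: "card (K i k) \<ge> m" using \<pi>[OF ij(1)] unfolding k_def by simp
    have cj: "card (K j k) \<ge> m" using \<pi>[OF ij(2)] ij(3) unfolding k_def by simp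
    have dj: "K i k \<inter> K j k = {}" using ij unfolding K_def Iset_def by auto
    have fi: "finite (K i k)" "finite (K j k)" using Ksub finite_subset by blast+
    have tri: "norm (A0 i - A0 j) \<le> norm (A0 i - Ahat k) + norm (A0 j - Ahat k)"
      using norm_triangle_ineq4[of "A0 i - Ahat k" "A0 j - Ahat k"] by simp
    have "\<gamma> * norm (A0 i - A0 j) \<le> \<gamma> * (norm (A0 i - Ahat k) + norm (A0 j - Ahat k))"
      using gpos tri by (intro mult_left_mono) auto
    also have "\<dots> \<le> (\<Sum>t\<in>K i k. \<bar>e t\<bar>) + (\<Sum>t\<in>K j k. \<bar>e t\<bar>)"
      using Ksum[OF ci] Ksum[OF cj] by (simp add: distrib_left)
    also have "\<dots> = (\<Sum>t\<in>K i k \<union> K j k. \<bar>e t\<bar>)" using fi dj by (simp add: sum.union_disjoint)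
    also have "\<dots> \<le> E" unfolding E_def using Ksub by (intro sum_mono2) auto
    finally have "\<gamma> * norm (A0 i - A0 j) \<le> E" .
    then have "(1 - 2 * \<xi>) * (\<gamma> * norm (A0 i - A0 j)) \<le> (1 - 2 * \<xi>) * E"
      using xpos by (intro mult_left_mono) auto
    with EB have le: "(\<gamma> * (1 - 2 * \<xi>)) * norm (A0 i - A0 j) \<le> 2 * \<delta>" by (simp add: algebra_simps)
    have "norm (A0 i - A0 j) > 2 * \<delta> / (\<gamma> * (1 - 2 * \<xi>))"
      using sep ij(1,2,4) unfolding \<delta>_def \<gamma>_def \<xi>_def by blast
    then have "2 * \<delta> < (\<gamma> * (1 - 2 * \<xi>)) * norm (A0 i - A0 j)"
      using gpos xpos by (simp add: pos_divide_less_eq mult.commute)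
    then show False using le by simp
  qed
  define p where "p = (\<lambda>i. if i \<in> {1..s} then \<pi> i else i)"
  have pe: "p i = \<pi> i" if "i \<in> {1..s}" for i using that by (simp add: p_def)
  have injp: "inj_on p {1..s}" using inj inj_on_cong[of "{1..s}" p \<pi>] pe by blast
  have "p ` {1..s} \<subseteq> {1..s}"
  proof (rule image_subsetI)
    fix i assume "i \<in> {1..s}" then show "p i \<in> {1..s}" using \<pi>[of i] pe[of i] by simp
  qed
  then have "p ` {1..s} = {1..s}" using injp by (intro endo_inj_surj) auto
  then have "bij_betw p {1..s} {1..s}" using injp by (simp add: bij_betw_def)
  then have perm: "p permutes {1..s}" by (rule bij_imp_permutes) (auto simp: p_def)
  show "comparable s N x y A0 Ahat"
    unfolding comparable_def
  proof (intro exI[of _ p] conjI perm ballI)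
    fix i assume i: "i \<in> {1..s}"
    then have "card (K i (p i)) \<ge> m" using \<pi>[OF i] pe[OF i] by simp
    then show "nu_gen N x \<le> card (Iset s N x y A0 i \<inter> Iset s N x y Ahat (p i))"
      using m unfolding K_def by simp
  qed
qed


end
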